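(* Let $B=\mathcal L'\cup\mathcal J'$ with $\mathcal L'\subseteq\mathcal L$, $\mathcal J'\subseteq\mathcal J$ be a nondegenerate feasible basis of $\mathrm{LP}(\theta,0)$. If $$0\le\varepsilon<\min_{j\in\mathcal J}\frac{\sum_{\ell\in\mathsf S(\mathcal T(j))}\mu_\ell-\sum_{k\in\mathsf C(\mathcal T(j))}\lambda_k}{|\mathsf S(\mathcal T(j))|},$$ then $B$ is also a nondegenerate feasible basis of $\mathrm{LP}(\theta,\varepsilon)$.
   Context: $\mathcal I=\{1,\dots,I\}$, $\mathcal J=\{1,\dots,J\}$ disjoint, $\mathcal L\subseteq\mathcal I\times\mathcal J$, $\mathcal S_i=\{j:(ij)\in\mathcal L\}$, $\mathcal C_j=\{i:(ij)\in\mathcal L\}$, $\lambda\in\mathbb R^I_{>0}$, $\mu\in\mathbb R^J_{>0}$, $\theta\in\mathbb R^{\mathcal L}_{\ge0}$. $\mathrm{LP}(\theta,\varepsilon)$ in standard form: maximize $\sum\theta_{ij}x_{ij}$ s.t. $\sum_{j\in\mathcal S_i}x_{ij}=\lambda_i$, $\sum_{i\in\mathcal C_j}x_{ij}+\sigma_j=\mu_j-\varepsilon$, $x,\sigma\ge0$, variables indexed by $\mathcal L\cup\mathcal J$. A basis is $B\subseteq\mathcal L\cup\mathcal J$, $|B|=I+J$, with invertible column submatrix; its basic solution has non-basic variables $0$; it is feasible if the basic solution is nonnegative and nondegenerate if every basic variable is nonzero. For a basis $B=\mathcal L'\cup\mathcal J'$, the subgraph of $(\mathcal I\cup\mathcal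 J,\mathcal L)$ with edges $\mathcal L'$ is a spanning forest in which each tree contains exactly one node of $\mathcal J'$, taken as its root; $\mathcal T(v)$ is the subtree rooted at $v$ (including $v$), $\mathsf C(\mathcal T(v))=\mathcal T(v)\cap\mathcal I$, $\mathsf S(\mathcal T(v))=\mathcal T(v)\cap\mathcal J$. *)

theory Defs
  imports Complex_Main
begin

text \<open>Customers are 1..nI, servers are 1..nJ. LP variables are indexed by
  (nat \<times> nat) + nat : Inl (i,j) is x_ij for a link (i,j), Inr j is the slack sigma_j.
  Constraint rows are indexed by nat + nat : Inl i is the customer-i row,
  Inr j is the server-j row. Graph nodes are nat + nat : Inl i customer, Inr j server.\<close>

type_synonym var = "(nat \<times> nat) + nat"
type_synonym row = "nat + nat"

definition lp_vars :: "nat \<Rightarrow> (nat \<times> nat) set \<Rightarrow> var set" where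
  "lp_vars nJ L = Inl ` L \<union> Inr ` {1..nJ}"

definition lp_rows :: "nat \<Rightarrow> nat \<Rightarrow> row set" where
  "lp_rows nI nJ = Inl ` {1..nI} \<union> Inr ` {1..nJ}"

fun lp_mat :: "row \<Rightarrow> var \<Rightarrow> real" where
  "lp_mat (Inl i) (Inl (i', j)) = (if i = i' then 1 else 0)"
| "lp_mat (Inr j) (Inl (i, j')) = (if j = j' then 1 else 0)"
| "lp_mat (Inl i) (Inr j) = 0"
| "lp_mat (Inr j) (Inr j') = (if j = j' then 1 else 0)"

fun lp_rhs :: "(nat \<Rightarrow> real) \<Rightarrow> (nat \<Rightarrow> real) \<Rightarrow> real \<Rightarrow> row \<Rightarrow> real" where
  "lp_rhs lam mu eps (Inl i) = lam i"
| "lp_rhs lam mu eps (Inr j) = mu j - eps"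

definition is_basis :: "nat \<Rightarrow> nat \<Rightarrow> (nat \<times> nat) set \<Rightarrow> var set \<Rightarrow> bool" where
  "is_basis nI nJ L B \<longleftrightarrow>
     B \<subseteq> lp_vars nJ L \<and> card B = nI + nJ \<and>
     (\<exists>N :: var \<Rightarrow> row \<Rightarrow> real.
        (\<forall>r\<in>lp_rows nI nJ. \<forall>r'\<in>lp_rows nI nJ.
            (\<Sum>c\<in>B. lp_mat r c * N c r') = (if r = r' then 1 else 0)) \<and>
        (\<forall>c\<in>B. \<forall>c'\<in>B.
            (\<Sum>r\<in>lp_rows nI nJ. N c r * lp_mat r c') = (if c = c' then 1 else 0)))"

definition is_basic_solution ::
  "nat \<Rightarrow> nat \<Rightarrow> (nat \<times> nat) set \<Rightarrow> (nat \<Rightarrow> real) \<Rightarrow> (nat \<Rightarrow> real) \<Rightarrow> real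
     \<Rightarrow> var set \<Rightarrow> (var \<Rightarrow> real) \<Rightarrow> bool" where
  "is_basic_solution nI nJ L lam mu eps B v \<longleftrightarrow>
     (\<forall>x. x \<notin> B \<longrightarrow> v x = 0) \<and>
     (\<forall>r\<in>lp_rows nI nJ. (\<Sum>c\<in>lp_vars nJ L. lp_mat r c * v c) = lp_rhs lam mu eps r)"

definition basic_solution ::
  "nat \<Rightarrow> nat \<Rightarrow> (nat \<times> nat) set \<Rightarrow> (nat \<Rightarrow> real) \<Rightarrow> (nat \<Rightarrow> real) \<Rightarrow> real
     \<Rightarrow> var set \<Rightarrow> var \<Rightarrow> real" where
  "basic_solution nI nJ L lam mu eps B = (THE v. is_basic_solution nI nJ L lam mu eps B v)"

text \<open>B is a nondegenerate feasible basis of LP(theta, eps). (The objective theta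
  does not affect these notions; it is kept as a parameter to mirror LP(theta, eps).)\<close>
definition nondeg_feasible_basis ::
  "nat \<Rightarrow> nat \<Rightarrow> (nat \<times> nat) set \<Rightarrow> (nat \<Rightarrow> real) \<Rightarrow> (nat \<Rightarrow> real)
     \<Rightarrow> (nat \<times> nat \<Rightarrow> real) \<Rightarrow> real \<Rightarrow> var set \<Rightarrow> bool" where
  "nondeg_feasible_basis nI nJ L lam mu theta eps B \<longleftrightarrow>
     is_basis nI nJ L B \<and>
     (\<forall>x\<in>B. basic_solution nI nJ L lam mu eps B x \<ge> 0) \<and>
     (\<forall>x\<in>B. basic_solution nI nJ L lam mu eps B x \<noteq> 0)"

definition forest_edges :: "var set \<Rightarrow> (row \<times> row) set" where
  "forest_edges B = {(Inl i, Inr j) | i j. Inl (i, j) \<in> B} \<union> {(Inr j, Inl i) | i j. Inl (i, j) \<in> B}"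

definition forest_roots :: "var set \<Rightarrow> row set" where
  "forest_roots B = {Inr j | j. Inr j \<in> B}"

definition subtree :: "var set \<Rightarrow> row \<Rightarrow> row set" where
  "subtree B v = {v} \<union>
     {w. w \<noteq> v \<and> (w, v) \<in> (forest_edges B)\<^sup>* \<and>
         \<not> (\<exists>r\<in>forest_roots B. r \<noteq> v \<and>
              (w, r) \<in> {(a, b) \<in> forest_edges B. a \<noteq> v \<and> b \<noteq> v}\<^sup>*)}"

definition C_of :: "row set \<Rightarrow> nat set" where
  "C_of T = {i. Inl i \<in> T}"

definition S_of :: "row set \<Rightarrow> nat set" where
  "S_of T = {j. Inr j \<in> T}"

end

theory Submission
  imports Defs
begin

lemma lp_mat_Inl: "lp_mat r (Inl (i,j)) = (if r = Inl i then 1 else 0) + (if r = Inr j then 1 else 0)"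
  by (cases r) auto
lemma lp_mat_Inr: "lp_mat r (Inr j) = (if r = Inr j then 1 else 0)"
  by (cases r) auto

lemma finite_rows: "finite (lp_rows nI nJ)" by (simp add: lp_rows_def)

lemma finite_vars: "L \<subseteq> {1..nI} \<times> {1..nJ} \<Longrightarrow> finite (lp_vars nJ L)"
  unfolding lp_vars_def using finite_subset by blast

definition gT :: "row set \<Rightarrow> row \<Rightarrow> real" where
  "gT T r = (if r \<in> T then (case r of Inl _ \<Rightarrow> -1 | Inr _ \<Rightarrow> 1) else 0)"

definition coefT :: "row set \<Rightarrow> var \<Rightarrow> real" where
  "coefT T c = (case c of Inl (i,j) \<Rightarrow> gT T (Inl i) + gT T (Inr j) | Inr j \<Rightarrow> gT T (Inr j))"

lemma sum_y_mat:
  assumes c: "c \<in> lp_vars nJ L" and L: "L \<subseteq> {1..nI} \<times> {1..nJ}"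
  shows "(\<Sum>r\<in>lp_rows nI nJ. y r * lp_mat r c) =
     (case c of Inl (i,j) \<Rightarrow> y (Inl i) + y (Inr j) | Inr j \<Rightarrow> y (Inr j))"
proof (cases c)
  case (Inl p)
  then obtain i j where p: "c = Inl (i,j)" by (cases p) auto
  with c L have ij: "Inl i \<in> lp_rows nI nJ" "Inr j \<in> lp_rows nI nJ"
    by (auto simp: lp_vars_def lp_rows_def)
  have "(\<Sum>r\<in>lp_rows nI nJ. y r * lp_mat r c) =
     (\<Sum>r\<in>lp_rows nI nJ. (if r = Inl i then y r else 0)) + (\<Sum>r\<in>lp_rows nI nJ. (if r = Inr j then y r else 0))"
    unfolding p lp_mat_Inl sum.distrib[symmetric] by (rule sum.cong) auto
  also have "\<dots> = y (Inl i) + y (Inr j)" using ij by (simp add: sum.delta[OF finite_rows])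
  finally show ?thesis using p by simp
next
  case (Inr j)
  with c have ij: "Inr j \<in> lp_rows nI nJ"
    by (auto simp: lp_vars_def lp_rows_def)
  have "(\<Sum>r\<in>lp_rows nI nJ. y r * lp_mat r c) = (\<Sum>r\<in>lp_rows nI nJ. (if r = Inr j then y r else 0))"
    unfolding Inr lp_mat_Inr by (rule sum.cong) auto
  also have "\<dots> = y (Inr j)" using ij by (simp add: sum.delta[OF finite_rows])
  finally show ?thesis using Inr by simp
qed

lemma kernel_col:
  assumes bas: "is_basis nI nJ L B" and L: "L \<subseteq> {1..nI} \<times> {1..nJ}"
    and z: "\<forall>r\<in>lp_rows nI nJ. (\<Sum>c\<in>B. lp_mat r c * z c) = 0"
    and c': "c' \<in> B"
  shows "z c' = 0"
proof -
  from bas obtain N where N2: "\<forall>c\<in>B. \<forall>c'\<in>B.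
            (\<Sum>r\<in>lp_rows nI nJ. N c r * lp_mat r c') = (if c = c' then 1 else 0)"
    and BV: "B \<subseteq> lp_vars nJ L"
    unfolding is_basis_def by blast
  have fB: "finite B" using finite_subset[OF BV finite_vars[OF L]] .
  have "z c' = (\<Sum>c\<in>B. (if c = c' then z c else 0))"
    using c' fB by (simp add: sum.delta)
  also have "\<dots> = (\<Sum>c\<in>B. (if c' = c then 1 else 0) * z c)"
    by (rule sum.cong) auto
  also have "\<dots> = (\<Sum>c\<in>B. (\<Sum>r\<in>lp_rows nI nJ. N c' r * lp_mat r c) * z c)"
    using N2 c' by simp
  also have "\<dots> = (\<Sum>r\<in>lp_rows nI nJ. N c' r * (\<Sum>c\<in>B. lp_mat r c * z c))"
    by (simp add: sum_distrib_left sum_distrib_right sum.swap[of _ B] mult.assoc)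
  also have "\<dots> = 0" using z by simp
  finally show ?thesis .
qed

lemma kernel_row:
  assumes bas: "is_basis nI nJ L B" and L: "L \<subseteq> {1..nI} \<times> {1..nJ}"
    and y: "\<forall>c\<in>B. (\<Sum>r\<in>lp_rows nI nJ. y r * lp_mat r c) = 0"
    and r': "r' \<in> lp_rows nI nJ"
  shows "y r' = 0"
proof -
  from bas obtain N where N1: "\<forall>r\<in>lp_rows nI nJ. \<forall>r'\<in>lp_rows nI nJ.
            (\<Sum>c\<in>B. lp_mat r c * N c r') = (if r = r' then 1 else 0)"
    unfolding is_basis_def by blast
  have "y r' = (\<Sum>r\<in>lp_rows nI nJ. (if r = r' then y r else 0))"
    using r' finite_rows by (simp add: sum.delta)
  also have "\<dots> = (\<Sum>r\<in>lp_rows nI nJ. y r * (if r = r' then 1 else 0))"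
    by (rule sum.cong) auto
  also have "\<dots> = (\<Sum>r\<in>lp_rows nI nJ. y r * (\<Sum>c\<in>B. lp_mat r c * N c r'))"
    using N1 r' by simp
  also have "\<dots> = (\<Sum>c\<in>B. (\<Sum>r\<in>lp_rows nI nJ. y r * lp_mat r c) * N c r')"
    by (simp add: sum_distrib_left sum_distrib_right sum.swap[of _ B] mult.assoc)
  also have "\<dots> = 0" using y by simp
  finally show ?thesis .
qed


lemma sum_vars_B:
  fixes v :: "var \<Rightarrow> real"
  assumes "B \<subseteq> lp_vars nJ L" "L \<subseteq> {1..nI} \<times> {1..nJ}" "\<forall>x. x \<notin> B \<longrightarrow> v x = 0"
  shows "(\<Sum>c\<in>lp_vars nJ L. f c * v c) = (\<Sum>c\<in>B. f c * v c)"
  by (rule sum.mono_neutral_right) (use assms finite_vars in auto)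

lemma basic_sol:
  assumes bas: "is_basis nI nJ L B" and L: "L \<subseteq> {1..nI} \<times> {1..nJ}"
  shows "is_basic_solution nI nJ L lam mu eps B (basic_solution nI nJ L lam mu eps B)"
proof -
  from bas obtain N where N1: "\<forall>r\<in>lp_rows nI nJ. \<forall>r'\<in>lp_rows nI nJ.
            (\<Sum>c\<in>B. lp_mat r c * N c r') = (if r = r' then 1 else 0)"
    and BV: "B \<subseteq> lp_vars nJ L"
    unfolding is_basis_def by blast
  define v where "v c = (if c \<in> B then (\<Sum>r\<in>lp_rows nI nJ. N c r * lp_rhs lam mu eps r) else 0)" for c
  have ex: "is_basic_solution nI nJ L lam mu eps B v"
    unfolding is_basic_solution_def
  proof (intro conjI allI impI ballI)
    fix x assume "x \<notin> B" then show "v x = 0" by (simp add: v_def)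
  next
    fix r' assume r': "r' \<in> lp_rows nI nJ"
    have "(\<Sum>c\<in>lp_vars nJ L. lp_mat r' c * v c) = (\<Sum>c\<in>B. lp_mat r' c * v c)"
      by (rule sum_vars_B[OF BV L]) (simp add: v_def)
    also have "\<dots> = (\<Sum>c\<in>B. lp_mat r' c * (\<Sum>r\<in>lp_rows nI nJ. N c r * lp_rhs lam mu eps r))"
      by (rule sum.cong) (auto simp: v_def)
    also have "\<dots> = (\<Sum>r\<in>lp_rows nI nJ. (\<Sum>c\<in>B. lp_mat r' c * N c r) * lp_rhs lam mu eps r)"
      unfolding sum_distrib_left sum_distrib_right
      by (subst sum.swap) (rule sum.cong[OF refl], rule sum.cong[OF refl], simp)
    also have "\<dots> = (\<Sum>r\<in>lp_rows nI nJ. (if r = r' then lp_rhs lam mu eps r else 0))"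
      by (rule sum.cong) (use N1 r' in auto)
    also have "\<dots> = lp_rhs lam mu eps r'" using r' finite_rows by (simp add: sum.delta')
    finally show "(\<Sum>c\<in>lp_vars nJ L. lp_mat r' c * v c) = lp_rhs lam mu eps r'" .
  qed
  have un: "w = v" if w: "is_basic_solution nI nJ L lam mu eps B w" for w
  proof
    fix c
    show "w c = v c"
    proof (cases "c \<in> B")
      case False then show ?thesis using w ex by (simp add: is_basic_solution_def)
    next
      case True
      have "(\<lambda>c. w c - v c) c = 0"
      proof (rule kernel_col[OF bas L _ True], intro ballI)
        fix r assume r: "r \<in> lp_rows nI nJ"
        have "(\<Sum>c\<in>B. lp_mat r c * (w c - v c)) = (\<Sum>c\<in>B. lp_mat r c * w c) - (\<Sum>c\<in>B. lp_mat r c * v c)"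
          by (simp add: right_diff_distrib sum_subtractf)
        also have "\<dots> = (\<Sum>c\<in>lp_vars nJ L. lp_mat r c * w c) - (\<Sum>c\<in>lp_vars nJ L. lp_mat r c * v c)"
          using sum_vars_B[OF BV L, of w] sum_vars_B[OF BV L, of v] w ex unfolding is_basic_solution_def by simp
        also have "\<dots> = 0" using w ex r unfolding is_basic_solution_def by simp
        finally show "(\<Sum>c\<in>B. lp_mat r c * (w c - v c)) = 0" .
      qed
      then show ?thesis by simp
    qed
  qed
  have "basic_solution nI nJ L lam mu eps B = v"
    unfolding basic_solution_def using ex un by (rule the_equality)
  then show ?thesis using ex by simp
qed

lemma cut_value:
  assumes sol: "is_basic_solution nI nJ L lam mu eps B v"
    and BV: "B \<subseteq> lp_vars nJ L" and L: "L \<subseteq> {1..nI} \<times> {1..nJ}"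
    and T: "T \<subseteq> lp_rows nI nJ"
  shows "(\<Sum>c\<in>B. v c * coefT T c) = sum mu (S_of T) - eps * card (S_of T) - sum lam (C_of T)"
proof -
  have z: "\<forall>x. x \<notin> B \<longrightarrow> v x = 0" and eq: "\<forall>r\<in>lp_rows nI nJ. (\<Sum>c\<in>lp_vars nJ L. lp_mat r c * v c) = lp_rhs lam mu eps r"
    using sol unfolding is_basic_solution_def by auto
  have "(\<Sum>c\<in>B. v c * coefT T c) = (\<Sum>c\<in>B. v c * (\<Sum>r\<in>lp_rows nI nJ. gT T r * lp_mat r c))"
  proof (rule sum.cong[OF refl])
    fix c assume "c \<in> B"
    then have "c \<in> lp_vars nJ L" using BV by auto
    from sum_y_mat[OF this L, of "gT T"] show "v c * coefT T c = v c * (\<Sum>r\<in>lp_rows nI nJ. gT T r * lp_mat r c)"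
      by (simp add: coefT_def)
  qed
  also have "\<dots> = (\<Sum>r\<in>lp_rows nI nJ. gT T r * (\<Sum>c\<in>B. lp_mat r c * v c))"
    unfolding sum_distrib_left sum_distrib_right
    by (subst sum.swap) (rule sum.cong[OF refl], rule sum.cong[OF refl], simp)
  also have "\<dots> = (\<Sum>r\<in>lp_rows nI nJ. gT T r * lp_rhs lam mu eps r)"
    by (rule sum.cong[OF refl]) (use eq sum_vars_B[OF BV L z] in simp)
  also have "\<dots> = (\<Sum>i\<in>{1..nI}. gT T (Inl i) * lam i) + (\<Sum>j\<in>{1..nJ}. gT T (Inr j) * (mu j - eps))"
    unfolding lp_rows_def
    by (subst sum.union_disjoint) (auto simp: sum.reindex)
  also have "(\<Sum>i\<in>{1..nI}. gT T (Inl i) * lam i) = (\<Sum>i\<in>{1..nI}. if i \<in> C_of T then - lam i else 0)"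
    by (rule sum.cong) (auto simp: gT_def C_of_def)
  also have "\<dots> = (\<Sum>i\<in>{1..nI} \<inter> C_of T. - lam i)" by (simp add: sum.inter_restrict)
  also have "{1..nI} \<inter> C_of T = C_of T" using T by (auto simp: C_of_def lp_rows_def)
  also have "(\<Sum>j\<in>{1..nJ}. gT T (Inr j) * (mu j - eps)) = (\<Sum>j\<in>{1..nJ}. if j \<in> S_of T then mu j - eps else 0)"
    by (rule sum.cong) (auto simp: gT_def S_of_def)
  also have "\<dots> = (\<Sum>j\<in>{1..nJ} \<inter> S_of T. mu j - eps)" by (simp add: sum.inter_restrict)
  also have "{1..nJ} \<inter> S_of T = S_of T" using T by (auto simp: S_of_def lp_rows_def)
  finally show ?thesis by (simp add: sum_negf sum_subtractf)
qed


definition sub :: "('a \<times> 'a) set \<Rightarrow> 'a set \<Rightarrow> 'a \<Rightarrow> 'a set" where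
  "sub E Rt v = {v} \<union> {w. w \<noteq> v \<and> (w, v) \<in> E\<^sup>* \<and>
         \<not> (\<exists>r\<in>Rt. r \<noteq> v \<and> (w, r) \<in> {(a, b) \<in> E. a \<noteq> v \<and> b \<noteq> v}\<^sup>*)}"

lemma subtree_sub: "subtree B v = sub (forest_edges B) (forest_roots B) v"
  unfolding subtree_def sub_def by simp

lemma rt_sym: "sym E \<Longrightarrow> (x,y) \<in> E\<^sup>* \<Longrightarrow> (y,x) \<in> E\<^sup>*"
  using sym_rtrancl by (metis symD)

lemma split_path:
  assumes "E \<subseteq> E' \<union> {(p,q),(q,p)}" "(x,y) \<in> E\<^sup>*"
  shows "(x,y) \<in> E'\<^sup>* \<or> (x,p) \<in> E'\<^sup>* \<or> (x,q) \<in> E'\<^sup>*"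
  using assms(2)
proof (induction rule: rtrancl_induct)
  case base then show ?case by simp
next
  case (step y z)
  then show ?case using assms(1) by (auto intro: rtrancl_into_rtrancl)
qed

lemma avoid_path:
  assumes "(w,R) \<in> E'\<^sup>*" "\<forall>z. (z,R) \<in> E'\<^sup>* \<longrightarrow> z \<noteq> q" "E' \<subseteq> E"
  shows "(w,R) \<in> {(a,b)\<in>E. a \<noteq> q \<and> b \<noteq> q}\<^sup>*"
  using assms(1)
proof (induction rule: converse_rtrancl_induct)
  case base then show ?case by simp
next
  case (step y z)
  then have "y \<noteq> q" "z \<noteq> q" using assms(2) by (auto intro: converse_rtrancl_into_rtrancl)
  with step assms(3) show ?case by (auto intro: converse_rtrancl_into_rtrancl)
qed

lemma in_sub_reach: "w \<in> sub E Rt v \<Longrightarrow> (w,v) \<in> E\<^sup>*"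
  unfolding sub_def by auto

lemma child_lemma:
  assumes symE': "sym E'" and sub1: "E' \<subseteq> E" and sub2: "E \<subseteq> E' \<union> {(p,q),(q,p)}"
    and pq: "(p,q) \<in> E"
    and bridge: "(p,q) \<notin> E'\<^sup>*"
    and P1: "\<forall>r\<in>Rt. \<forall>r'\<in>Rt. (r,r') \<in> E\<^sup>* \<longrightarrow> r = r'"
    and R: "R \<in> Rt" "(p,R) \<in> E'\<^sup>*"
  shows "q \<in> sub E Rt q" "p \<notin> sub E Rt q" "sub E Rt q \<inter> Rt = {}"
    "\<forall>x y. (x,y) \<in> E \<longrightarrow> x \<in> sub E Rt q \<longrightarrow> y \<notin> sub E Rt q \<longrightarrow> x = q \<and> y = p"
proof -
  define K where "K = {w. (q,w) \<in> E'\<^sup>*}"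
  have sy: "(y,x) \<in> E'\<^sup>*" if "(x,y) \<in> E'\<^sup>*" for x y using rt_sym[OF symE' that] .
  have mono: "(x,y) \<in> E\<^sup>*" if "(x,y) \<in> E'\<^sup>*" for x y using rtrancl_mono[OF sub1] that by blast
  have Kroot: "K \<inter> Rt = {}"
  proof (rule ccontr)
    assume "K \<inter> Rt \<noteq> {}"
    then obtain r where r: "r \<in> Rt" "(q,r) \<in> E'\<^sup>*" unfolding K_def by auto
    have "(R,p) \<in> E\<^sup>*" using mono[OF sy[OF R(2)]] .
    also have "(p,q) \<in> E\<^sup>*" using pq by simp
    also have "(q,r) \<in> E\<^sup>*" using mono[OF r(2)] .
    finally have "r = R" using P1 r(1) R(1) by auto
    with r R(2) have "(p,q) \<in> E'\<^sup>*" using sy by (meson rtrancl_trans)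
    with bridge show False by simp
  qed
  have noq: "\<forall>z. (z,R) \<in> E'\<^sup>* \<longrightarrow> z \<noteq> q"
  proof (intro allI impI notI)
    fix z assume "(z,R) \<in> E'\<^sup>*" "z = q"
    then have "(p,q) \<in> E'\<^sup>*" using R(2) sy by (meson rtrancl_trans)
    with bridge show False by simp
  qed
  have TK: "sub E Rt q = K"
  proof
    show "sub E Rt q \<subseteq> K"
    proof
      fix w assume w: "w \<in> sub E Rt q"
      show "w \<in> K"
      proof (cases "w = q")
        case True then show ?thesis by (simp add: K_def)
      next
        case False
        with w have wq: "(w,q) \<in> E\<^sup>*" and nr: "\<not> (\<exists>r\<in>Rt. r \<noteq> q \<and> (w, r) \<in> {(a, b) \<in> E. a \<noteq> q \<and> b \<noteq> q}\<^sup>*)"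
          unfolding sub_def by auto
        from split_path[OF sub2 wq] have "(w,q) \<in> E'\<^sup>* \<or> (w,p) \<in> E'\<^sup>*" by auto
        then show ?thesis
        proof
          assume "(w,q) \<in> E'\<^sup>*" then show ?thesis using sy K_def by auto
        next
          assume "(w,p) \<in> E'\<^sup>*"
          then have "(w,R) \<in> E'\<^sup>*" using R(2) by (meson rtrancl_trans)
          from avoid_path[OF this noq sub1] have "(w,R) \<in> {(a,b)\<in>E. a \<noteq> q \<and> b \<noteq> q}\<^sup>*" .
          moreover have "R \<noteq> q" using noq by auto
          ultimately show ?thesis using nr R(1) by auto
        qed
      qed
    qed
  next
    show "K \<subseteq> sub E Rt q"
    proof
      fix w assume w: "w \<in> K"
      show "w \<in> sub E Rt q"
      proof (cases "w = q")
        case True then show ?thesis by (simp add: sub_def)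
      next
        case False
        have wq: "(w,q) \<in> E\<^sup>*" using w sy mono K_def by auto
        have "\<not> (\<exists>r\<in>Rt. r \<noteq> q \<and> (w, r) \<in> {(a, b) \<in> E. a \<noteq> q \<and> b \<noteq> q}\<^sup>*)"
        proof
          assume "\<exists>r\<in>Rt. r \<noteq> q \<and> (w, r) \<in> {(a, b) \<in> E. a \<noteq> q \<and> b \<noteq> q}\<^sup>*"
          then obtain r where r: "r \<in> Rt" "(w, r) \<in> {(a, b) \<in> E. a \<noteq> q \<and> b \<noteq> q}\<^sup>*" by auto
          have "{(a, b) \<in> E. a \<noteq> q \<and> b \<noteq> q} \<subseteq> E'" using sub2 by auto
          then have "(w,r) \<in> E'\<^sup>*" using r(2) rtrancl_mono by blast
          then have "r \<in> K" using w K_def by (auto intro: rtrancl_trans)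
          with Kroot r(1) show False by auto
        qed
        with False wq show ?thesis unfolding sub_def by auto
      qed
    qed
  qed
  show "q \<in> sub E Rt q" by (simp add: sub_def)
  show "p \<notin> sub E Rt q" using TK K_def bridge sy by auto
  show "sub E Rt q \<inter> Rt = {}" using TK Kroot by simp
  show "\<forall>x y. (x,y) \<in> E \<longrightarrow> x \<in> sub E Rt q \<longrightarrow> y \<notin> sub E Rt q \<longrightarrow> x = q \<and> y = p"
  proof (intro allI impI)
    fix x y assume xy: "(x,y) \<in> E" "x \<in> sub E Rt q" "y \<notin> sub E Rt q"
    have "(x,y) \<notin> E'"
    proof
      assume "(x,y) \<in> E'"
      then have "y \<in> K" using xy(2) TK K_def by (auto intro: rtrancl_into_rtrancl)
      with xy(3) TK show False by simp
    qed
    then have "(x,y) = (p,q) \<or> (x,y) = (q,p)" using xy(1) sub2 by auto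
    moreover have "p \<notin> K" using K_def bridge sy by auto
    ultimately show "x = q \<and> y = p" using xy TK by auto
  qed
qed

lemma root_lemma:
  assumes symE: "sym E"
    and P1: "\<forall>r\<in>Rt. \<forall>r'\<in>Rt. (r,r') \<in> E\<^sup>* \<longrightarrow> r = r'"
    and R: "R \<in> Rt"
  shows "\<forall>x y. (x,y) \<in> E \<longrightarrow> x \<in> sub E Rt R \<longrightarrow> y \<in> sub E Rt R"
    "sub E Rt R \<inter> Rt = {R}"
proof -
  show "\<forall>x y. (x,y) \<in> E \<longrightarrow> x \<in> sub E Rt R \<longrightarrow> y \<in> sub E Rt R"
  proof (intro allI impI)
    fix x y assume xy: "(x,y) \<in> E" "x \<in> sub E Rt R"
    have yx: "(y,x) \<in> E" using xy(1) symE by (auto dest: symD)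
    have xR: "(x,R) \<in> E\<^sup>*" using in_sub_reach[OF xy(2)] .
    have yR: "(y,R) \<in> E\<^sup>*" using yx xR by (auto intro: converse_rtrancl_into_rtrancl)
    show "y \<in> sub E Rt R"
    proof (cases "y = R")
      case True then show ?thesis by (simp add: sub_def)
    next
      case False
      have "\<not> (\<exists>r\<in>Rt. r \<noteq> R \<and> (y, r) \<in> {(a, b) \<in> E. a \<noteq> R \<and> b \<noteq> R}\<^sup>*)"
      proof
        assume "\<exists>r\<in>Rt. r \<noteq> R \<and> (y, r) \<in> {(a, b) \<in> E. a \<noteq> R \<and> b \<noteq> R}\<^sup>*"
        then obtain r where r: "r \<in> Rt" "r \<noteq> R" "(y, r) \<in> {(a, b) \<in> E. a \<noteq> R \<and> b \<noteq> R}\<^sup>*" by auto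
        show False
        proof (cases "x = R")
          case True
          have "(y,r) \<in> E\<^sup>*" using r(3) rtrancl_mono[of "{(a, b) \<in> E. a \<noteq> R \<and> b \<noteq> R}" E] by blast
          then have "(R,r) \<in> E\<^sup>*" using xy(1) True by (auto intro: converse_rtrancl_into_rtrancl)
          with P1 R r show False by auto
        next
          case xR': False
          have "(x,y) \<in> {(a, b) \<in> E. a \<noteq> R \<and> b \<noteq> R}" using xy(1) xR' False by auto
          then have "(x,r) \<in> {(a, b) \<in> E. a \<noteq> R \<and> b \<noteq> R}\<^sup>*" using r(3) by (auto intro: converse_rtrancl_into_rtrancl)
          with xy(2) xR' r(1,2) show False unfolding sub_def by auto
        qed
      qed
      with False yR show ?thesis unfolding sub_def by auto
    qed
  qed
  show "sub E Rt R \<inter> Rt = {R}"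
    using R unfolding sub_def by auto
qed


definition tau :: "row \<Rightarrow> row \<Rightarrow> real" where
  "tau x r = (if r = x then (case x of Inl _ \<Rightarrow> -1 | Inr _ \<Rightarrow> 1) else 0)"

lemma fe_sym: "sym (forest_edges F)"
  unfolding forest_edges_def sym_def by auto

lemma fe_mono: "F \<subseteq> B \<Longrightarrow> forest_edges F \<subseteq> forest_edges B"
  unfolding forest_edges_def by auto

lemma fe_split: "forest_edges B \<subseteq> forest_edges (B - {Inl (i,j)}) \<union> {(Inl i, Inr j), (Inr j, Inl i)}"
  unfolding forest_edges_def by auto

lemma fe_edge: "Inl (i,j) \<in> B \<Longrightarrow> (Inl i, Inr j) \<in> forest_edges B \<and> (Inr j, Inl i) \<in> forest_edges B"
  unfolding forest_edges_def by auto

lemma fe_rows: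
  assumes "B \<subseteq> lp_vars nJ L" "L \<subseteq> {1..nI} \<times> {1..nJ}" "(x,y) \<in> forest_edges B"
  shows "x \<in> lp_rows nI nJ"
  using assms unfolding forest_edges_def lp_vars_def lp_rows_def by auto

lemma reach_rows:
  assumes "B \<subseteq> lp_vars nJ L" "L \<subseteq> {1..nI} \<times> {1..nJ}" "(w,x) \<in> (forest_edges B)\<^sup>*"
    "x \<in> lp_rows nI nJ"
  shows "w \<in> lp_rows nI nJ"
  using assms(3) by (cases rule: converse_rtranclE) (use assms fe_rows in auto)

lemma add_col:
  assumes "c0 \<in> B" "finite B"
  shows "(\<Sum>c\<in>B. lp_mat r c * (z c + s * (if c = c0 then 1 else 0))) = (\<Sum>c\<in>B. lp_mat r c * z c) + s * lp_mat r c0"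
proof -
  have "(\<Sum>c\<in>B. lp_mat r c * (z c + s * (if c = c0 then 1 else 0))) =
        (\<Sum>c\<in>B. lp_mat r c * z c) + (\<Sum>c\<in>B. if c = c0 then s * lp_mat r c else 0)"
    unfolding sum.distrib[symmetric] by (rule sum.cong) (auto simp: algebra_simps)
  also have "(\<Sum>c\<in>B. if c = c0 then s * lp_mat r c else 0) = s * lp_mat r c0"
    using assms by (simp add: sum.delta)
  finally show ?thesis .
qed

lemma walk:
  assumes F: "F \<subseteq> B" and fin: "finite B" and xy: "(x,y) \<in> (forest_edges F)\<^sup>*"
  shows "\<exists>z::var\<Rightarrow>real. (\<forall>c. z c \<noteq> 0 \<longrightarrow> c \<in> F \<and> (\<exists>p. c = Inl p)) \<and>
           (\<forall>r. (\<Sum>c\<in>B. lp_mat r c * z c) = tau x r - tau y r)"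
  using xy
proof (induction rule: rtrancl_induct)
  case base
  show ?case by (rule exI[of _ "\<lambda>_. 0"]) simp
next
  case (step y w)
  from step.IH obtain z where z: "\<forall>c. z c \<noteq> 0 \<longrightarrow> c \<in> F \<and> (\<exists>p. c = Inl p)"
    "\<forall>r. (\<Sum>c\<in>B. lp_mat r c * z c) = tau x r - tau y r" by blast
  from step.hyps(2) obtain i j where ij: "Inl (i,j) \<in> F" and
    cases: "(y = Inl i \<and> w = Inr j) \<or> (y = Inr j \<and> w = Inl i)"
    unfolding forest_edges_def by auto
  define s :: real where "s = (if y = Inl i then -1 else 1)"
  define z' where "z' c = z c + s * (if c = Inl (i,j) then 1 else 0)" for c
  have c0B: "Inl (i,j) \<in> B" using ij F by auto
  show ?case
  proof (rule exI[of _ z'], rule conjI; intro allI impI)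
    fix c assume "z' c \<noteq> 0"
    then show "c \<in> F \<and> (\<exists>p. c = Inl p)" using z(1) ij unfolding z'_def by (cases "c = Inl (i,j)") auto
  next
    fix r
    have "(\<Sum>c\<in>B. lp_mat r c * z' c) = tau x r - tau y r + s * lp_mat r (Inl (i,j))"
      unfolding z'_def add_col[OF c0B fin] using z(2) by simp
    also have "\<dots> = tau x r - tau w r"
      using cases unfolding s_def tau_def lp_mat_Inl by auto
    finally show "(\<Sum>c\<in>B. lp_mat r c * z' c) = tau x r - tau w r" .
  qed
qed

lemma finB: "is_basis nI nJ L B \<Longrightarrow> L \<subseteq> {1..nI} \<times> {1..nJ} \<Longrightarrow> finite B"
  unfolding is_basis_def using finite_subset finite_vars by blast

lemma P1:
  assumes bas: "is_basis nI nJ L B" and L: "L \<subseteq> {1..nI} \<times> {1..nJ}"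
    and r: "Inr j0 \<in> B" "Inr j1 \<in> B" and path: "(Inr j0, Inr j1) \<in> (forest_edges B)\<^sup>*"
  shows "j0 = j1"
proof (rule ccontr)
  assume ne: "j0 \<noteq> j1"
  have fin: "finite B" using finB[OF bas L] .
  obtain z :: "var \<Rightarrow> real" where z: "\<forall>c. z c \<noteq> 0 \<longrightarrow> c \<in> B \<and> (\<exists>p. c = Inl p)"
    "\<forall>r. (\<Sum>c\<in>B. lp_mat r c * z c) = tau (Inr j0) r - tau (Inr j1) r"
    using walk[OF subset_refl fin path] by blast
  define z1 where "z1 c = z c + (-1) * (if c = Inr j0 then 1 else 0)" for c
  define z2 where "z2 c = z1 c + 1 * (if c = Inr j1 then 1 else 0)" for c
  have "z2 (Inr j0) = 0"
  proof (rule kernel_col[OF bas L _ r(1)], intro ballI)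
    fix r' assume "r' \<in> lp_rows nI nJ"
    have "(\<Sum>c\<in>B. lp_mat r' c * z2 c) = tau (Inr j0) r' - tau (Inr j1) r' + (-1) * lp_mat r' (Inr j0) + 1 * lp_mat r' (Inr j1)"
      unfolding z2_def add_col[OF r(2) fin] unfolding z1_def add_col[OF r(1) fin] using z(2) by simp
    also have "\<dots> = 0" unfolding tau_def lp_mat_Inr by auto
    finally show "(\<Sum>c\<in>B. lp_mat r' c * z2 c) = 0" .
  qed
  moreover have "z (Inr j0) = 0" using z(1) by blast
  ultimately show False using ne unfolding z2_def z1_def by simp
qed

lemma P3:
  assumes bas: "is_basis nI nJ L B" and L: "L \<subseteq> {1..nI} \<times> {1..nJ}"
    and c0: "Inl (i,j) \<in> B"
  shows "(Inl i, Inr j) \<notin> (forest_edges (B - {Inl (i,j)}))\<^sup>*"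
proof
  assume path: "(Inl i, Inr j) \<in> (forest_edges (B - {Inl (i,j)}))\<^sup>*"
  have fin: "finite B" using finB[OF bas L] .
  obtain z :: "var \<Rightarrow> real" where z: "\<forall>c. z c \<noteq> 0 \<longrightarrow> c \<in> B - {Inl (i,j)} \<and> (\<exists>p. c = Inl p)"
    "\<forall>r. (\<Sum>c\<in>B. lp_mat r c * z c) = tau (Inl i) r - tau (Inr j) r"
    using walk[OF _ fin path] by blast
  define z1 where "z1 c = z c + 1 * (if c = Inl (i,j) then 1 else 0)" for c
  have "z1 (Inl (i,j)) = 0"
  proof (rule kernel_col[OF bas L _ c0], intro ballI)
    fix r' assume "r' \<in> lp_rows nI nJ"
    have "(\<Sum>c\<in>B. lp_mat r' c * z1 c) = tau (Inl i) r' - tau (Inr j) r' + 1 * lp_mat r' (Inl (i,j))"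
      unfolding z1_def add_col[OF c0 fin] using z(2) by simp
    also have "\<dots> = 0" unfolding tau_def lp_mat_Inl by auto
    finally show "(\<Sum>c\<in>B. lp_mat r' c * z1 c) = 0" .
  qed
  moreover have "z (Inl (i,j)) = 0" using z(1) by blast
  ultimately show False unfolding z1_def by simp
qed

lemma P2:
  assumes bas: "is_basis nI nJ L B" and L: "L \<subseteq> {1..nI} \<times> {1..nJ}"
    and x: "x \<in> lp_rows nI nJ"
  shows "\<exists>R\<in>forest_roots B. (x,R) \<in> (forest_edges B)\<^sup>*"
proof (rule ccontr)
  assume no: "\<not> (\<exists>R\<in>forest_roots B. (x,R) \<in> (forest_edges B)\<^sup>*)"
  define K where "K = {w. (x,w) \<in> (forest_edges B)\<^sup>*}"
  have BV: "B \<subseteq> lp_vars nJ L" using bas unfolding is_basis_def by auto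
  have "gT K x = 0"
  proof (rule kernel_row[OF bas L _ x], intro ballI)
    fix c assume c: "c \<in> B"
    then have cv: "c \<in> lp_vars nJ L" using BV by auto
    show "(\<Sum>r\<in>lp_rows nI nJ. gT K r * lp_mat r c) = 0"
      unfolding sum_y_mat[OF cv L]
    proof (cases c)
      case (Inl p)
      then obtain i j where p: "c = Inl (i,j)" by (cases p) auto
      have e: "(Inl i, Inr j) \<in> forest_edges B" "(Inr j, Inl i) \<in> forest_edges B"
        using fe_edge c p by auto
      have "Inl i \<in> K \<longleftrightarrow> Inr j \<in> K" unfolding K_def using e
        by (auto intro: rtrancl_into_rtrancl)
      then show "(case c of Inl (i, j) \<Rightarrow> gT K (Inl i) + gT K (Inr j) | Inr j \<Rightarrow> gT K (Inr j)) = 0"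
        using p by (auto simp: gT_def)
    next
      case (Inr j)
      then have "Inr j \<in> forest_roots B" using c by (auto simp: forest_roots_def)
      then have "Inr j \<notin> K" using no K_def by auto
      then show "(case c of Inl (i, j) \<Rightarrow> gT K (Inl i) + gT K (Inr j) | Inr j \<Rightarrow> gT K (Inr j)) = 0"
        using Inr by (auto simp: gT_def)
    qed
  qed
  moreover have "x \<in> K" by (simp add: K_def)
  ultimately show False by (cases x) (auto simp: gT_def)
qed


lemma single_sum:
  fixes v :: "var \<Rightarrow> real"
  assumes "finite B" "c \<in> B" "\<forall>c'\<in>B. c' \<noteq> c \<longrightarrow> coefT T c' = 0"
  shows "(\<Sum>c'\<in>B. v c' * coefT T c') = v c * coefT T c"
proof -
  have "(\<Sum>c'\<in>B. v c' * coefT T c') = v c * coefT T c + (\<Sum>c'\<in>B - {c}. v c' * coefT T c')"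
    using assms by (simp add: sum.remove)
  also have "(\<Sum>c'\<in>B - {c}. v c' * coefT T c') = 0"
    using assms by (intro sum.neutral) auto
  finally show ?thesis by simp
qed

lemma coef_edge0: "(Inl i \<in> T \<longleftrightarrow> Inr j \<in> T) \<Longrightarrow> coefT T (Inl (i,j)) = 0"
  by (auto simp: coefT_def gT_def)

lemma coef_root0: "Inr j \<notin> T \<Longrightarrow> coefT T (Inr j) = 0"
  by (auto simp: coefT_def gT_def)

theorem lemma3:
  fixes nI nJ :: nat and L :: "(nat \<times> nat) set"
    and lam mu :: "nat \<Rightarrow> real" and theta :: "nat \<times> nat \<Rightarrow> real"
    and B :: "var set" and eps :: real
  assumes L: "L \<subseteq> {1..nI} \<times> {1..nJ}"
    and lam: "\<forall>i\<in>{1..nI}. lam i > 0"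
    and mu: "\<forall>j\<in>{1..nJ}. mu j > 0"
    and theta: "\<forall>l\<in>L. theta l \<ge> 0"
    and B: "nondeg_feasible_basis nI nJ L lam mu theta 0 B"
    and eps0: "0 \<le> eps"
    and eps: "eps < (MIN j\<in>{1..nJ}.
                (sum mu (S_of (subtree B (Inr j))) - sum lam (C_of (subtree B (Inr j))))
                / real (card (S_of (subtree B (Inr j)))))"
  shows "nondeg_feasible_basis nI nJ L lam mu theta eps B"
proof -
  define E where "E = forest_edges B"
  define Rt where "Rt = forest_roots B"
  define v0 where "v0 = basic_solution nI nJ L lam mu 0 B"
  define ve where "ve = basic_solution nI nJ L lam mu eps B"
  have bas: "is_basis nI nJ L B" using B unfolding nondeg_feasible_basis_def by auto
  have pos0: "\<forall>x\<in>B. v0 x > 0"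
  proof
    fix x assume "x \<in> B"
    then have "v0 x \<ge> 0" "v0 x \<noteq> 0" using B unfolding nondeg_feasible_basis_def v0_def by auto
    then show "v0 x > 0" by simp
  qed
  have BV: "B \<subseteq> lp_vars nJ L" using bas unfolding is_basis_def by auto
  have fin: "finite B" using finB[OF bas L] .
  have sol0: "is_basic_solution nI nJ L lam mu 0 B v0" using basic_sol[OF bas L] v0_def by simp
  have sole: "is_basic_solution nI nJ L lam mu eps B ve" using basic_sol[OF bas L] ve_def by simp
  have P1': "\<forall>r\<in>Rt. \<forall>r'\<in>Rt. (r,r') \<in> E\<^sup>* \<longrightarrow> r = r'"
    using P1[OF bas L] unfolding Rt_def E_def forest_roots_def by auto
  have Tsub: "subtree B x \<subseteq> lp_rows nI nJ" if "x \<in> lp_rows nI nJ" for x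
  proof
    fix w assume "w \<in> subtree B x"
    then have "(w,x) \<in> (forest_edges B)\<^sup>*" unfolding subtree_sub by (rule in_sub_reach)
    then show "w \<in> lp_rows nI nJ" using reach_rows[OF BV L _ that] by blast
  qed
  define f where "f j = (sum mu (S_of (subtree B (Inr j))) - sum lam (C_of (subtree B (Inr j))))
                / real (card (S_of (subtree B (Inr j))))" for j
  have key_pos: "ve c > 0" if c: "c \<in> B" and j: "j \<in> {1..nJ}" and
       zero: "\<forall>c'\<in>B. c' \<noteq> c \<longrightarrow> coefT (subtree B (Inr j)) c' = 0"
       and one: "coefT (subtree B (Inr j)) c = 1" for c j
  proof -
    let ?T = "subtree B (Inr j)"
    have T: "?T \<subseteq> lp_rows nI nJ" using Tsub j by (auto simp: lp_rows_def)
    have e: "ve c = sum mu (S_of ?T) - eps * card (S_of ?T) - sum lam (C_of ?T)"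
      using cut_value[OF sole BV L T] single_sum[OF fin c zero, of ve] one by simp
    have "j \<in> S_of ?T" by (simp add: S_of_def subtree_def)
    moreover have "S_of ?T \<subseteq> {1..nJ}" using T by (auto simp: S_of_def lp_rows_def)
    then have "finite (S_of ?T)" using finite_subset by blast
    ultimately have cardpos: "card (S_of ?T) > 0" using card_gt_0_iff by blast
    have "Min (f ` {1..nJ}) \<le> f j" using j by (intro Min_le) auto
    moreover have "Min (f ` {1..nJ}) = (MIN j\<in>{1..nJ}.
                (sum mu (S_of (subtree B (Inr j))) - sum lam (C_of (subtree B (Inr j))))
                / real (card (S_of (subtree B (Inr j)))))" unfolding f_def ..
    ultimately have "eps < f j" using eps by linarith
    then have "eps * card (S_of ?T) < sum mu (S_of ?T) - sum lam (C_of ?T)"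
      using cardpos unfolding f_def by (simp add: pos_less_divide_eq)
    then show ?thesis using e by simp
  qed
  have key_neg: "ve c > 0" if c: "c \<in> B" and i: "i \<in> {1..nI}" and
       zero: "\<forall>c'\<in>B. c' \<noteq> c \<longrightarrow> coefT (subtree B (Inl i)) c' = 0"
       and one: "coefT (subtree B (Inl i)) c = -1" for c i
  proof -
    let ?T = "subtree B (Inl i)"
    have T: "?T \<subseteq> lp_rows nI nJ" using Tsub i by (auto simp: lp_rows_def)
    have e: "- ve c = sum mu (S_of ?T) - eps * card (S_of ?T) - sum lam (C_of ?T)"
      using cut_value[OF sole BV L T] single_sum[OF fin c zero, of ve] one by simp
    have e0: "- v0 c = sum mu (S_of ?T) - 0 * card (S_of ?T) - sum lam (C_of ?T)"
      using cut_value[OF sol0 BV L T] single_sum[OF fin c zero, of v0] one by simp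
    have "v0 c > 0" using pos0 c by auto
    moreover have "eps * card (S_of ?T) \<ge> 0" using eps0 by simp
    ultimately show ?thesis using e e0 by linarith
  qed
  have allpos: "\<forall>c\<in>B. ve c > 0"
  proof
    fix c assume c: "c \<in> B"
    show "ve c > 0"
    proof (cases c)
      case (Inr j)
      have R: "Inr j \<in> Rt" using c Inr by (auto simp: Rt_def forest_roots_def)
      have j: "j \<in> {1..nJ}" using c Inr BV by (auto simp: lp_vars_def)
      note RL = root_lemma[OF fe_sym[of B] P1'[unfolded E_def Rt_def] R[unfolded Rt_def]]
      let ?T = "subtree B (Inr j)"
      show ?thesis
      proof (rule key_pos[OF c j])
        show "\<forall>c'\<in>B. c' \<noteq> c \<longrightarrow> coefT ?T c' = 0"
        proof (intro ballI impI)
          fix c' assume c': "c' \<in> B" "c' \<noteq> c"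
          show "coefT ?T c' = 0"
          proof (cases c')
            case (Inl p)
            then obtain i' j' where p: "c' = Inl (i',j')" by (cases p) auto
            have "(Inl i', Inr j') \<in> forest_edges B" "(Inr j', Inl i') \<in> forest_edges B"
              using fe_edge c' p by auto
            then have "Inl i' \<in> ?T \<longleftrightarrow> Inr j' \<in> ?T"
              using RL(1)[rule_format, of "Inl i'" "Inr j'"] RL(1)[rule_format, of "Inr j'" "Inl i'"]
              unfolding subtree_sub by blast
            then show ?thesis using p coef_edge0 by simp
          next
            case (Inr j')
            then have "Inr j' \<in> forest_roots B" "Inr j' \<noteq> Inr j" using c' \<open>c = Inr j\<close>
              by (auto simp: forest_roots_def)
            then have "Inr j' \<notin> ?T" using RL(2) unfolding subtree_sub by auto
            then show ?thesis using Inr coef_root0 by simp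
          qed
        qed
        show "coefT ?T c = 1" using Inr by (simp add: coefT_def gT_def subtree_def)
      qed
    next
      case (Inl p)
      then obtain i j where cij: "c = Inl (i,j)" by (cases p) auto
      have ij: "i \<in> {1..nI}" "j \<in> {1..nJ}" using c cij BV L by (auto simp: lp_vars_def)
      define E' where "E' = forest_edges (B - {c})"
      have aR: "Inl i \<in> lp_rows nI nJ" using ij by (simp add: lp_rows_def)
      obtain R where R: "R \<in> Rt" "(Inl i, R) \<in> E\<^sup>*"
        using P2[OF bas L aR] unfolding Rt_def E_def by blast
      have Ra: "(R, Inl i) \<in> E\<^sup>*" using rt_sym[OF fe_sym R(2)[unfolded E_def]] E_def by simp
      have split: "E \<subseteq> E' \<union> {(Inl i, Inr j), (Inr j, Inl i)}"
        unfolding E_def E'_def cij by (rule fe_split)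
      have symE': "sym E'" unfolding E'_def by (rule fe_sym)
      have E'E: "E' \<subseteq> E" unfolding E'_def E_def by (rule fe_mono) auto
      have edge: "(Inl i, Inr j) \<in> E" "(Inr j, Inl i) \<in> E" using fe_edge c cij E_def by auto
      have bridge: "(Inl i, Inr j) \<notin> E'\<^sup>*" using P3[OF bas L c[unfolded cij]] E'_def cij by simp
      have bridge': "(Inr j, Inl i) \<notin> E'\<^sup>*" using bridge rt_sym[OF symE'] by blast
      have P1'': "\<forall>r\<in>Rt. \<forall>r'\<in>Rt. (r,r') \<in> E\<^sup>* \<longrightarrow> r = r'" using P1' .
      from split_path[OF split Ra]
      have "(R, Inl i) \<in> E'\<^sup>* \<or> (R, Inr j) \<in> E'\<^sup>*" by auto
      then show ?thesis
      proof
        assume "(R, Inl i) \<in> E'\<^sup>*"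
        then have aR': "(Inl i, R) \<in> E'\<^sup>*" using rt_sym[OF symE'] by blast
        note CL = child_lemma[OF symE' E'E split edge(1) bridge P1' R(1) aR']
        let ?T = "subtree B (Inr j)"
        have TT: "?T = sub E Rt (Inr j)" unfolding subtree_sub E_def Rt_def ..
        show ?thesis
        proof (rule key_pos[OF c ij(2)])
          show "\<forall>c'\<in>B. c' \<noteq> c \<longrightarrow> coefT ?T c' = 0"
          proof (intro ballI impI)
            fix c' assume c': "c' \<in> B" "c' \<noteq> c"
            show "coefT ?T c' = 0"
            proof (cases c')
              case (Inl p)
              then obtain i' j' where p: "c' = Inl (i',j')" by (cases p) auto
              have e2: "(Inl i', Inr j') \<in> E" "(Inr j', Inl i') \<in> E"
                using fe_edge c' p E_def by auto
              have h1: "Inl i' \<in> ?T \<Longrightarrow> Inr j' \<in> ?T"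
                using CL(4)[rule_format, OF e2(1)] c'(2) p cij unfolding TT by auto
              have h2: "Inr j' \<in> ?T \<Longrightarrow> Inl i' \<in> ?T"
                using CL(4)[rule_format, OF e2(2)] c'(2) p cij unfolding TT by auto
              from h1 h2 have "Inl i' \<in> ?T \<longleftrightarrow> Inr j' \<in> ?T" by blast
              then show ?thesis using p coef_edge0 by simp
            next
              case (Inr j')
              then have "Inr j' \<in> Rt" using c' by (auto simp: Rt_def forest_roots_def)
              then have "Inr j' \<notin> ?T" using CL(3) TT by auto
              then show ?thesis using Inr coef_root0 by simp
            qed
          qed
          show "coefT ?T c = 1" using CL(1,2) TT cij by (simp add: coefT_def gT_def)
        qed
      next
        assume "(R, Inr j) \<in> E'\<^sup>*"
        then have bR': "(Inr j, R) \<in> E'\<^sup>*" using rt_sym[OF symE'] by blast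
        have split': "E \<subseteq> E' \<union> {(Inr j, Inl i), (Inl i, Inr j)}" using split by auto
        note CL = child_lemma[OF symE' E'E split' edge(2) bridge' P1' R(1) bR']
        let ?T = "subtree B (Inl i)"
        have TT: "?T = sub E Rt (Inl i)" unfolding subtree_sub E_def Rt_def ..
        show ?thesis
        proof (rule key_neg[OF c ij(1)])
          show "\<forall>c'\<in>B. c' \<noteq> c \<longrightarrow> coefT ?T c' = 0"
          proof (intro ballI impI)
            fix c' assume c': "c' \<in> B" "c' \<noteq> c"
            show "coefT ?T c' = 0"
            proof (cases c')
              case (Inl p)
              then obtain i' j' where p: "c' = Inl (i',j')" by (cases p) auto
              have e2: "(Inl i', Inr j') \<in> E" "(Inr j', Inl i') \<in> E"
                using fe_edge c' p E_def by auto
              have h1: "Inl i' \<in> ?T \<Longrightarrow> Inr j' \<in> ?T"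
                using CL(4)[rule_format, OF e2(1)] c'(2) p cij unfolding TT by auto
              have h2: "Inr j' \<in> ?T \<Longrightarrow> Inl i' \<in> ?T"
                using CL(4)[rule_format, OF e2(2)] c'(2) p cij unfolding TT by auto
              from h1 h2 have "Inl i' \<in> ?T \<longleftrightarrow> Inr j' \<in> ?T" by blast
              then show ?thesis using p coef_edge0 by simp
            next
              case (Inr j')
              then have "Inr j' \<in> Rt" using c' by (auto simp: Rt_def forest_roots_def)
              then have "Inr j' \<notin> ?T" using CL(3) TT by auto
              then show ?thesis using Inr coef_root0 by simp
            qed
          qed
          show "coefT ?T c = -1" using CL(1,2) TT cij by (simp add: coefT_def gT_def)
        qed
      qed
    qed
  qed
  show ?thesis
    unfolding nondeg_feasible_basis_def using bas allpos ve_def by auto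
qed

end
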